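(* Let $x,y\in\{a,b\}^*$ be two different words and let $\omega=xy^{-1}\in\mathbf{F}_2$. Then the pair $(x,y)$ can be separated exactly by a 2-state MCQFA (with complex amplitudes) if and only if the image of the word map $f_\omega: SU(2)\times SU(2)\to SU(2)$ contains the matrix $\begin{pmatrix} i & 0\\ 0 & -i\end{pmatrix}$.
   Context: $\mathbf{F}_2$ is the free group on generators $a,b$, i.e. reduced words over $\{a,b,a^{-1},b^{-1}\}$ with concatenation. For a group $G$ and $\omega\in\mathbf{F}_2$, the word map $f_\omega:G\times G\to G$ sends $(g,h)$ to the element obtained from $\omega$ by substituting $g$ for $a$ and $h$ for $b$ (and $g^{-1},h^{-1}$ for $a^{-1},b^{-1}$). $SU(2)$ is the group of $2\times 2$ complex unitary matrices of determinant $1$. A 2-state Moore–Crutchfield quantum finite automaton (MCQFA) over $\{a,b\}$ consists of unitaries $U_a,U_b\in\mathbb{C}^{2\times 2}$, an initial unit vector $|u_0\rangle\in\mathbb{C}^2$ and a set of accepting basis states; on input $w=w_1\cdots w_k$ the final state is $U_{w_k}\cdots U_{w_1}|u_0\rangle$ and the acceptance probability is the sum of the squared moduli of its accepting coordinates. The pair $(x,y)$ is separated exactly if one word is accepted with probability $1$ and the other with probability $0$. *)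

theory Defs
  imports "HOL-Analysis.Analysis"
begin

datatype gen = GA | GB

type_synonym pword = "gen list"

text \<open>Letters of F_2: a generator with an exponent sign (True = +1, False = -1).
  Elements of F_2 are reduced words of such letters.\<close>
type_synonym letter = "gen \<times> bool"

definition inv_letter :: "letter \<Rightarrow> letter" where
  "inv_letter l = (fst l, \<not> snd l)"

fun reduced :: "letter list \<Rightarrow> bool" where
  "reduced (l1 # l2 # ls) = (l2 \<noteq> inv_letter l1 \<and> reduced (l2 # ls))"
| "reduced _ = True"

fun cons_red :: "letter \<Rightarrow> letter list \<Rightarrow> letter list" where
  "cons_red l [] = [l]"
| "cons_red l (m # ms) = (if m = inv_letter l then ms else l # m # ms)"

definition reduce :: "letter list \<Rightarrow> letter list" where
  "reduce ls = foldr cons_red ls []"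

definition F2 :: "letter list set" where
  "F2 = {w. reduced w}"

definition f2_mult :: "letter list \<Rightarrow> letter list \<Rightarrow> letter list" where
  "f2_mult u v = reduce (u @ v)"

definition f2_inv :: "letter list \<Rightarrow> letter list" where
  "f2_inv u = rev (map inv_letter u)"

definition embed_word :: "pword \<Rightarrow> letter list" where
  "embed_word x = map (\<lambda>g. (g, True)) x"

definition omega :: "pword \<Rightarrow> pword \<Rightarrow> letter list" where
  "omega x y = f2_mult (embed_word x) (f2_inv (embed_word y))"

type_synonym cmat = "complex ^ 2 ^ 2"
type_synonym cvec = "complex ^ 2"

definition adjoint_mat :: "cmat \<Rightarrow> cmat" where
  "adjoint_mat A = (\<chi> i j. cnj (A $ j $ i))"

definition unitary2 :: "cmat \<Rightarrow> bool" where
  "unitary2 U \<longleftrightarrow> U ** adjoint_mat U = mat 1 \<and> adjoint_mat U ** U = mat 1"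

definition SU2 :: "cmat set" where
  "SU2 = {U. unitary2 U \<and> det U = 1}"

definition letter_val :: "cmat \<Rightarrow> cmat \<Rightarrow> letter \<Rightarrow> cmat" where
  "letter_val g h l =
     (let M = (case fst l of GA \<Rightarrow> g | GB \<Rightarrow> h) in if snd l then M else matrix_inv M)"

definition word_map :: "letter list \<Rightarrow> cmat \<Rightarrow> cmat \<Rightarrow> cmat" where
  "word_map w g h = foldr (\<lambda>l M. letter_val g h l ** M) w (mat 1)"

definition diag_i :: cmat where
  "diag_i = (\<chi> i j. if i = j then (if i = 1 then \<i> else - \<i>) else 0)"

record mcqfa =
  Ua :: cmat
  Ub :: cmat
  u0 :: cvec
  acc :: "2 set"

definition valid_mcqfa :: "mcqfa \<Rightarrow> bool" where
  "valid_mcqfa M \<longleftrightarrow> unitary2 (Ua M) \<and> unitary2 (Ub M) \<and> norm (u0 M) = 1"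

definition umat :: "mcqfa \<Rightarrow> gen \<Rightarrow> cmat" where
  "umat M g = (case g of GA \<Rightarrow> Ua M | GB \<Rightarrow> Ub M)"

definition final_state :: "mcqfa \<Rightarrow> pword \<Rightarrow> cvec" where
  "final_state M w = fold (\<lambda>g v. umat M g *v v) w (u0 M)"

definition accept_prob :: "mcqfa \<Rightarrow> pword \<Rightarrow> real" where
  "accept_prob M w = (\<Sum>i\<in>acc M. (cmod (final_state M w $ i))\<^sup>2)"

definition separates_exactly :: "mcqfa \<Rightarrow> pword \<Rightarrow> pword \<Rightarrow> bool" where
  "separates_exactly M x y \<longleftrightarrow>
     (accept_prob M x = 1 \<and> accept_prob M y = 0) \<or>
     (accept_prob M x = 0 \<and> accept_prob M y = 1)"

end

theory Submission
  imports Defs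
begin

lemma cmat_eq: "(A::cmat) = B \<longleftrightarrow> A$1$1 = B$1$1 \<and> A$1$2 = B$1$2 \<and> A$2$1 = B$2$1 \<and> A$2$2 = B$2$2"
  by (auto simp: vec_eq_iff forall_2)

lemma cvec_eq: "(u::cvec) = v \<longleftrightarrow> u$1 = v$1 \<and> u$2 = v$2"
  by (auto simp: vec_eq_iff forall_2)

lemma mult_entry[simp]: "((A::cmat) ** B)$i$j = A$i$1 * B$1$j + A$i$2*B$2$j"
  by (simp add: matrix_matrix_mult_def sum_2)

lemma mv_entry[simp]: "((A::cmat) *v v)$i = A$i$1 * v$1 + A$i$2 * v$2"
  by (simp add: matrix_vector_mult_def sum_2)

lemma adj_entry[simp]: "adjoint_mat A $i$j = cnj (A$j$i)"
  by (simp add: adjoint_mat_def)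

lemma mat_entry[simp]: "(mat k :: cmat) $i$j = (if i = j then k else 0)"
  by (simp add: mat_def)

lemma diag_entry[simp]: "diag_i $i$j = (if i = j then (if i = 1 then \<i> else - \<i>) else 0)"
  by (simp add: diag_i_def)


lemma adj_adj[simp]: "adjoint_mat (adjoint_mat A) = A"
  by (simp add: cmat_eq)

lemma adj_mult: "adjoint_mat ((A::cmat) ** B) = adjoint_mat B ** adjoint_mat A"
  by (simp add: cmat_eq algebra_simps)

lemma det_adj: "det (adjoint_mat (A::cmat)) = cnj (det A)"
  by (simp add: det_2)

lemma matrix_inv_unitary: assumes "unitary2 U" shows "matrix_inv U = adjoint_mat U"
  unfolding matrix_inv_def
proof (rule some_equality)
  show "U ** adjoint_mat U = mat 1 \<and> adjoint_mat U ** U = mat 1" using assms by (simp add: unitary2_def)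
  fix A' assume a: "U ** A' = mat 1 \<and> A' ** U = mat 1"
  have "adjoint_mat U = adjoint_mat U ** (U ** A')" using a by simp
  also have "\<dots> = A'" using assms by (simp add: matrix_mul_assoc unitary2_def)
  finally show "A' = adjoint_mat U" by simp
qed

lemma unitary_adj: "unitary2 U \<Longrightarrow> unitary2 (adjoint_mat U)"
  by (simp add: unitary2_def)

lemma unitary_mult: "unitary2 A \<Longrightarrow> unitary2 B \<Longrightarrow> unitary2 (A ** B)"
  unfolding unitary2_def adj_mult
  by (metis matrix_mul_assoc matrix_mul_rid)

lemma unitary_one: "unitary2 (mat 1)"
  by (simp add: unitary2_def cmat_eq)

lemma SU2_mult: "A \<in> SU2 \<Longrightarrow> B \<in> SU2 \<Longrightarrow> A ** B \<in> SU2"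
  by (simp add: SU2_def unitary_mult det_mul)

lemma SU2_adj: "A \<in> SU2 \<Longrightarrow> adjoint_mat A \<in> SU2"
  by (simp add: SU2_def unitary_adj det_adj)

lemma SU2_one: "mat 1 \<in> SU2"
  by (simp add: SU2_def unitary_one det_I)

definition gval :: "cmat \<Rightarrow> cmat \<Rightarrow> gen \<Rightarrow> cmat" where
  "gval g h c = (case c of GA \<Rightarrow> g | GB \<Rightarrow> h)"

lemma letter_val_u: "unitary2 g \<Longrightarrow> unitary2 h \<Longrightarrow>
   letter_val g h l = (if snd l then gval g h (fst l) else adjoint_mat (gval g h (fst l)))"
  by (cases "fst l") (auto simp: letter_val_def gval_def matrix_inv_unitary)

lemma gval_unitary: "unitary2 g \<Longrightarrow> unitary2 h \<Longrightarrow> unitary2 (gval g h c)"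
  by (cases c) (auto simp: gval_def)

lemma gval_SU2: "g \<in> SU2 \<Longrightarrow> h \<in> SU2 \<Longrightarrow> gval g h c \<in> SU2"
  by (cases c) (auto simp: gval_def)

lemma letter_val_unitary: "unitary2 g \<Longrightarrow> unitary2 h \<Longrightarrow> unitary2 (letter_val g h l)"
  by (simp add: letter_val_u gval_unitary unitary_adj)

lemma letter_val_SU2: "g \<in> SU2 \<Longrightarrow> h \<in> SU2 \<Longrightarrow> letter_val g h l \<in> SU2"
  using letter_val_u[of g h l] SU2_def
  by (metis SU2_adj gval_SU2 mem_Collect_eq)

lemma letter_val_inv: "unitary2 g \<Longrightarrow> unitary2 h \<Longrightarrow>
   letter_val g h (inv_letter l) = adjoint_mat (letter_val g h l)"
  by (simp add: letter_val_u inv_letter_def)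

lemma wm_Nil[simp]: "word_map [] g h = mat 1"
  by (simp add: word_map_def)

lemma wm_Cons[simp]: "word_map (l # w) g h = letter_val g h l ** word_map w g h"
  by (simp add: word_map_def)

lemma wm_append: "word_map (u @ v) g h = word_map u g h ** word_map v g h"
  by (induction u) (auto simp: matrix_mul_assoc)

lemma wm_unitary: "unitary2 g \<Longrightarrow> unitary2 h \<Longrightarrow> unitary2 (word_map w g h)"
  by (induction w) (auto simp: unitary_one unitary_mult letter_val_unitary)

lemma wm_SU2: "g \<in> SU2 \<Longrightarrow> h \<in> SU2 \<Longrightarrow> word_map w g h \<in> SU2"
  by (induction w) (auto simp: SU2_one SU2_mult letter_val_SU2)

lemma wm_f2_inv: assumes "unitary2 g" "unitary2 h"
  shows "word_map (f2_inv w) g h = adjoint_mat (word_map w g h)"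
proof (induction w)
  case Nil then show ?case by (simp add: f2_inv_def cmat_eq)
next
  case (Cons l w)
  have "f2_inv (l # w) = f2_inv w @ [inv_letter l]" by (simp add: f2_inv_def)
  then show ?case using Cons assms
    by (simp add: wm_append letter_val_inv adj_mult)
qed

lemma wm_cons_red: assumes "unitary2 g" "unitary2 h"
  shows "word_map (cons_red l w) g h = letter_val g h l ** word_map w g h"
proof (cases w)
  case Nil then show ?thesis by simp
next
  case (Cons m ms)
  show ?thesis
  proof (cases "m = inv_letter l")
    case True
    have "letter_val g h l ** (letter_val g h m ** word_map ms g h) = word_map ms g h"
      using True assms letter_val_unitary[OF assms, of l]
      by (simp add: letter_val_inv matrix_mul_assoc unitary2_def)
    then show ?thesis using Cons True by simp
  next
    case False then show ?thesis using Cons by simp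
  qed
qed

lemma wm_reduce: assumes "unitary2 g" "unitary2 h"
  shows "word_map (reduce w) g h = word_map w g h"
  unfolding reduce_def
  by (induction w) (simp_all add: wm_cons_red[OF assms])

lemma wm_omega: assumes "unitary2 g" "unitary2 h"
  shows "word_map (omega x y) g h =
     word_map (embed_word x) g h ** adjoint_mat (word_map (embed_word y) g h)"
  by (simp add: omega_def f2_mult_def wm_reduce[OF assms] wm_append wm_f2_inv[OF assms])

lemma adj_conj: "adjoint_mat (V ** G ** adjoint_mat V) = V ** adjoint_mat G ** adjoint_mat V"
  by (simp add: adj_mult matrix_mul_assoc)

lemma unitary_conj: "unitary2 V \<Longrightarrow> unitary2 G \<Longrightarrow> unitary2 (V ** G ** adjoint_mat V)"
  by (simp add: unitary_mult unitary_adj)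

lemma wm_conj: assumes V: "unitary2 V" and g: "unitary2 g" and h: "unitary2 h"
  shows "word_map w (V ** g ** adjoint_mat V) (V ** h ** adjoint_mat V) = V ** word_map w g h ** adjoint_mat V"
proof (induction w)
  case Nil then show ?case using V by (simp add: unitary2_def)
next
  case (Cons l w)
  have gv: "gval (V ** g ** adjoint_mat V) (V ** h ** adjoint_mat V) c = V ** gval g h c ** adjoint_mat V" for c
    by (cases c) (simp_all add: gval_def)
  have lv: "letter_val (V ** g ** adjoint_mat V) (V ** h ** adjoint_mat V) l = V ** letter_val g h l ** adjoint_mat V"
    using letter_val_u[OF unitary_conj[OF V g] unitary_conj[OF V h], of l] letter_val_u[OF g h, of l]
    by (simp add: gv adj_conj)
  have "(V ** letter_val g h l ** adjoint_mat V) ** (V ** word_map w g h ** adjoint_mat V)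
        = V ** letter_val g h l ** (adjoint_mat V ** V) ** word_map w g h ** adjoint_mat V"
    by (simp add: matrix_mul_assoc)
  also have "\<dots> = V ** (letter_val g h l ** word_map w g h) ** adjoint_mat V"
    using V by (simp add: unitary2_def matrix_mul_assoc)
  finally show ?case using Cons lv by simp
qed

definition smat :: "complex \<Rightarrow> cmat \<Rightarrow> cmat" where
  "smat c A = (\<chi> i j. c * A$i$j)"

lemma smat_entry[simp]: "smat c A $ i $ j = c * A$i$j"
  by (simp add: smat_def)

lemma embed_Cons[simp]: "embed_word (c # w) = (c, True) # embed_word w"
  by (simp add: embed_word_def)

lemma embed_Nil[simp]: "embed_word [] = []"
  by (simp add: embed_word_def)

lemma letter_val_pos[simp]: "letter_val g h (c, True) = gval g h c"
  by (cases c) (simp_all add: letter_val_def gval_def)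

lemma wm_scale: assumes "a \<noteq> 0" "b \<noteq> 0"
  shows "\<exists>k. k \<noteq> 0 \<and> word_map (embed_word w) (smat a g) (smat b h) = smat k (word_map (embed_word w) g h)"
proof (induction w)
  case Nil then show ?case by (intro exI[of _ 1]) (simp add: cmat_eq)
next
  case (Cons c w)
  then obtain k where k: "k \<noteq> 0" "word_map (embed_word w) (smat a g) (smat b h) = smat k (word_map (embed_word w) g h)" by blast
  show ?case
  proof (cases c)
    case GA then show ?thesis using k assms
      by (intro exI[of _ "a * k"]) (simp add: gval_def cmat_eq algebra_simps)
  next
    case GB then show ?thesis using k assms
      by (intro exI[of _ "b * k"]) (simp add: gval_def cmat_eq algebra_simps)
  qed
qed

definition ip :: "cvec \<Rightarrow> cvec \<Rightarrow> complex" where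
  "ip u v = cnj (u$1) * v$1 + cnj (u$2) * v$2"

lemma ip_adj: "ip (adjoint_mat M *v u) v = ip u (M *v v)"
  by (simp add: ip_def algebra_simps)

lemma ip_cnj: "cnj (ip u v) = ip v u"
  by (simp add: ip_def mult.commute)

lemma ip_smat: "ip u (smat c M *v v) = c * ip u (M *v v)"
  by (simp add: ip_def algebra_simps)

lemma adj_smat: "adjoint_mat (smat c M) = smat (cnj c) (adjoint_mat M)"
  by (simp add: cmat_eq)

lemma smat_mult: "smat a A ** smat b B = smat (a*b) (A ** B)"
  by (simp add: cmat_eq algebra_simps)

lemma norm_sq: "(norm (v::cvec))^2 = (cmod (v$1))^2 + (cmod (v$2))^2"
  by (simp add: norm_vec_def L2_set_def sum_2)

lemma ip_self: "ip v v = complex_of_real ((norm v)^2)"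
  unfolding norm_sq of_real_add complex_norm_square ip_def by (simp add: mult.commute)

lemma ip_unitary: "unitary2 U \<Longrightarrow> ip (U *v v) (U *v v) = ip v v"
proof -
  assume "unitary2 U"
  then have "adjoint_mat U ** U = mat 1" by (simp add: unitary2_def)
  have "ip (U *v v) (U *v v) = ip v (adjoint_mat U *v (U *v v))"
    by (metis adj_adj ip_adj)
  also have "\<dots> = ip v v" using \<open>adjoint_mat U ** U = mat 1\<close>
    by (simp add: matrix_vector_mul_assoc)
  finally show ?thesis .
qed

lemma norm_unitary: "unitary2 U \<Longrightarrow> norm (U *v v) = norm v"
proof -
  assume "unitary2 U"
  then have "complex_of_real ((norm (U *v v))^2) = complex_of_real ((norm v)^2)"
    using ip_unitary[of U v] by (simp only: ip_self)
  then have "(norm (U *v v))^2 = (norm v)^2" using of_real_eq_iff by blast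
  then show ?thesis by (simp add: power2_eq_iff_nonneg)
qed

lemma final_state_eq: assumes "valid_mcqfa M"
  shows "fold (\<lambda>g v. umat M g *v v) w u =
     adjoint_mat (word_map (embed_word w) (adjoint_mat (Ua M)) (adjoint_mat (Ub M))) *v u"
proof (induction w arbitrary: u)
  case Nil
  have "adjoint_mat (mat 1 :: cmat) = mat 1" by (simp add: cmat_eq)
  then show ?case by simp
next
  case (Cons c w)
  have "gval (adjoint_mat (Ua M)) (adjoint_mat (Ub M)) c = adjoint_mat (umat M c)"
    by (cases c) (simp_all add: gval_def umat_def)
  then show ?case using Cons
    by (simp add: adj_mult matrix_vector_mul_assoc)
qed

definition mk2 :: "complex \<Rightarrow> complex \<Rightarrow> complex \<Rightarrow> complex \<Rightarrow> cmat" where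
  "mk2 a b c d = (\<chi> i j. if i = 1 then (if j = 1 then a else b) else (if j = 1 then c else d))"

lemma mk2_entries[simp]: "mk2 a b c d $ 1 $ 1 = a" "mk2 a b c d $ 1 $ 2 = b"
  "mk2 a b c d $ 2 $ 1 = c" "mk2 a b c d $ 2 $ 2 = d"
  by (simp_all add: mk2_def)

lemma su2_form: assumes "U \<in> SU2"
  shows "U$2$2 = cnj (U$1$1)" "U$1$2 = - cnj (U$2$1)"
proof -
  define J where "J = mk2 (U$2$2) (- U$1$2) (- U$2$1) (U$1$1)"
  have d: "det U = 1" and u: "adjoint_mat U ** U = mat 1" using assms by (auto simp: SU2_def unitary2_def)
  have "U ** J = mat 1" using d by (simp add: J_def cmat_eq det_2 algebra_simps)
  then have "adjoint_mat U = adjoint_mat U ** (U ** J)" by simp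
  also have "\<dots> = J" using u by (simp add: matrix_mul_assoc)
  finally have "adjoint_mat U = J" .
  then have "adjoint_mat U $ 1 $ 1 = J $ 1 $ 1" "adjoint_mat U $ 2 $ 1 = J $ 2 $ 1" by simp_all
  then show "U$2$2 = cnj (U$1$1)" "U$1$2 = - cnj (U$2$1)" unfolding J_def
    by (simp_all, metis complex_cnj_cnj complex_cnj_minus)
qed

lemma su2_det: assumes "U \<in> SU2" shows "U$1$1 * cnj (U$1$1) + U$2$1 * cnj (U$2$1) = 1"
proof -
  have "det U = 1" using assms by (simp add: SU2_def)
  then show ?thesis using su2_form[OF assms] by (simp add: det_2 mult.commute)
qed

lemma unitary_decomp: assumes "unitary2 U"
  shows "\<exists>a g. a \<noteq> 0 \<and> g \<in> SU2 \<and> U = smat a g"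
proof -
  have "det (U ** adjoint_mat U) = 1" using assms by (simp add: unitary2_def det_I)
  then have dd: "det U * cnj (det U) = 1" by (simp add: det_mul det_adj)
  define a where "a = csqrt (det U)"
  have a2: "a^2 = det U" by (simp add: a_def)
  have "complex_of_real ((cmod (det U))^2) = 1" using dd by (simp only: complex_norm_square)
  then have "(cmod (det U))^2 = 1" using of_real_eq_1_iff by blast
  then have cd: "cmod (det U) = 1" using norm_ge_zero[of "det U"] by (auto simp add: power2_eq_1_iff)
  have "(cmod a)^2 = 1" using cd a2 by (metis norm_power)
  then have acnj: "a * cnj a = 1" by (metis complex_norm_square of_real_1)
  have ca: "cmod a = 1" using \<open>(cmod a)^2 = 1\<close> norm_ge_zero[of a] by (auto simp add: power2_eq_1_iff)
  have a0: "a \<noteq> 0" using ca by auto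
  define g where "g = smat (cnj a) U"
  have U: "U = smat a g" using acnj by (simp add: g_def cmat_eq algebra_simps)
  have "unitary2 g" using assms acnj unfolding g_def unitary2_def
    by (simp add: adj_smat smat_mult mult.commute cmat_eq)
  moreover have "det g = 1"
  proof -
    have "det g = (cnj a)^2 * det U" by (simp add: g_def det_2 power2_eq_square algebra_simps)
    also have "\<dots> = (cnj a * a)^2" using a2 by (simp add: power_mult_distrib)
    finally show ?thesis using acnj by (simp add: mult.commute)
  qed
  ultimately show ?thesis using a0 U by (auto simp: SU2_def)
qed

lemma key_conj:
  assumes W: "W \<in> SU2" and uu: "ip u u = 1" and uw: "ip u (W *v u) = 0"
  shows "\<exists>V\<in>SU2. V ** W ** adjoint_mat V = diag_i"
proof -
  define a where "a = W$1$1"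
  define b where "b = W$2$1"
  have W12: "W$1$2 = - cnj b" and W22: "W$2$2 = cnj a" using su2_form[OF W] by (simp_all add: a_def b_def)
  have ab: "a * cnj a + b * cnj b = 1" using su2_det[OF W] by (simp add: a_def b_def)
  have "(a + cnj a) * ip u u = ip u (W *v u) + cnj (ip u (W *v u))"
    by (simp add: ip_def W12 W22 flip: a_def b_def) (simp add: algebra_simps)
  then have "a + cnj a = 0" using uu uw by simp
  then have tr: "cnj a = - a" by (metis add.commute eq_neg_iff_add_eq_0)
  have WW: "W ** W = mat (-1)"
    using ab tr by (simp add: cmat_eq W12 W22 flip: a_def b_def) (simp add: algebra_simps)
  define w where "w = W *v u"
  have Ww: "W *v w = - u" using WW by (simp add: w_def matrix_vector_mul_assoc cvec_eq)
  have ww: "ip w w = 1" using uu W by (simp add: w_def ip_unitary SU2_def)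
  have uw': "ip u w = 0" "ip w u = 0" using uw ip_cnj[of u w] by (simp_all add: w_def)
  define c :: complex where "c = of_real (1 / sqrt 2)"
  have cc: "c * c = 1/2" by (simp add: c_def flip: of_real_mult)
  have ccnj: "cnj c = c" by (simp add: c_def)
  define s :: cvec where "s = (\<chi> k. c * (u$k - \<i> * w$k))"
  have s1: "s$1 = c * (u$1 - \<i> * w$1)" and s2: "s$2 = c * (u$2 - \<i> * w$2)" by (simp_all add: s_def)
  have "ip s s = c * c * (ip u u + ip w w - \<i> * ip u w + \<i> * ip w u)"
    by (simp add: ip_def s1 s2 ccnj) (simp add: algebra_simps)
  then have "ip s s = 1" using uu ww uw' cc by simp
  then have ss: "s$1 * cnj (s$1) + s$2 * cnj (s$2) = 1"
    by (simp add: ip_def mult.commute)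
  have Wu: "(W *v u)$1 = w$1" "(W *v u)$2 = w$2" by (simp_all add: w_def)
  have Wwc: "(W *v w)$1 = - u$1" "(W *v w)$2 = - u$2" using Ww by simp_all
  have h1: "a * u$1 - cnj b * u$2 = w$1" and h2: "b * u$1 + cnj a * u$2 = w$2"
    using Wu by (simp_all add: W12 W22 flip: a_def b_def)
  have h3: "a * w$1 - cnj b * w$2 = - u$1" and h4: "b * w$1 + cnj a * w$2 = - u$2"
    using Wwc by (simp_all add: W12 W22 flip: a_def b_def)
  have ii: "\<i> * \<i> = (-1::complex)" by simp
  have e1: "a * s$1 - cnj b * s$2 = \<i> * s$1"
  proof -
    have "a * s$1 - cnj b * s$2 = c * ((a * u$1 - cnj b * u$2) - \<i> * (a * w$1 - cnj b * w$2))"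
      unfolding s1 s2 by (simp add: algebra_simps)
    also have "\<dots> = c * (w$1 + \<i> * u$1)" using h1 h3 by simp
    also have "\<dots> = \<i> * s$1" unfolding s1 by (simp add: algebra_simps)
    finally show ?thesis .
  qed
  have e2: "b * s$1 + cnj a * s$2 = \<i> * s$2"
  proof -
    have "b * s$1 + cnj a * s$2 = c * ((b * u$1 + cnj a * u$2) - \<i> * (b * w$1 + cnj a * w$2))"
      unfolding s1 s2 by (simp add: algebra_simps)
    also have "\<dots> = c * (w$2 + \<i> * u$2)" using h2 h4 by simp
    also have "\<dots> = \<i> * s$2" unfolding s2 by (simp add: algebra_simps)
    finally show ?thesis .
  qed
  have e1c: "cnj a * cnj (s$1) - b * cnj (s$2) = - \<i> * cnj (s$1)"
    using arg_cong[OF e1, of cnj] by simp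
  have e2c: "cnj b * cnj (s$1) + a * cnj (s$2) = - \<i> * cnj (s$2)"
    using arg_cong[OF e2, of cnj] by simp
  define Vs where "Vs = mk2 (s$1) (- cnj (s$2)) (s$2) (cnj (s$1))"
  have e1': "a * s$1 = \<i> * s$1 + cnj b * s$2" using e1 by (metis diff_add_cancel)
  have e2': "b * s$1 = \<i> * s$2 - cnj a * s$2" using e2 by (metis add_diff_cancel_right')
  have e1c': "cnj a * cnj (s$1) = - \<i> * cnj (s$1) + b * cnj (s$2)" using e1c by (metis diff_add_cancel)
  have e2c': "a * cnj (s$2) = - \<i> * cnj (s$2) - cnj b * cnj (s$1)" using e2c by (metis add_diff_cancel_left')
  have WV: "W ** Vs = Vs ** diag_i"
    unfolding cmat_eq Vs_def mult_entry mk2_entries diag_entry W12 W22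
    by (simp add: e1' e2' e1c' e2c' flip: a_def b_def)
  have Vu: "adjoint_mat Vs ** Vs = mat 1" "Vs ** adjoint_mat Vs = mat 1"
    using ss by (simp_all add: cmat_eq Vs_def algebra_simps)
  have Vdet: "det Vs = 1" using ss by (simp add: Vs_def det_2 mult.commute)
  have VS: "Vs \<in> SU2" using Vu Vdet by (simp add: SU2_def unitary2_def)
  have "adjoint_mat Vs ** W ** Vs = diag_i"
    using WV Vu by (metis matrix_mul_assoc matrix_mul_lid)
  then show ?thesis using SU2_adj[OF VS] by (intro bexI[of _ "adjoint_mat Vs"]) simp_all
qed

lemma unitary_cancel1: "unitary2 U \<Longrightarrow> X ** U ** adjoint_mat U = X"
  by (metis matrix_mul_assoc matrix_mul_rid unitary2_def)

lemma unitary_cancel2: "unitary2 U \<Longrightarrow> X ** adjoint_mat U ** U = X"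
  by (metis matrix_mul_assoc matrix_mul_rid unitary2_def)

lemma prob_orth:
  fixes f g :: cvec and acc :: "2 set"
  assumes nf: "norm f = 1" and pf: "(\<Sum>i\<in>acc. (cmod (f $ i))\<^sup>2) = 1"
    and pg: "(\<Sum>i\<in>acc. (cmod (g $ i))\<^sup>2) = 0"
  shows "ip f g = 0"
proof -
  have all: "(\<Sum>i\<in>UNIV. (cmod (f $ i))\<^sup>2) = 1"
    using nf norm_sq[of f] by (simp add: sum_2)
  have split: "(\<Sum>i\<in>UNIV. (cmod (f $ i))\<^sup>2) = (\<Sum>i\<in>UNIV - acc. (cmod (f $ i))\<^sup>2) + (\<Sum>i\<in>acc. (cmod (f $ i))\<^sup>2)"
    by (rule sum.subset_diff) auto
  then have z: "(\<Sum>i\<in>UNIV - acc. (cmod (f $ i))\<^sup>2) = 0" using all pf by simp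
  have "\<forall>i\<in>UNIV - acc. (cmod (f $ i))\<^sup>2 = 0"
    using z by (subst (asm) sum_nonneg_eq_0_iff) auto
  then have f0: "i \<notin> acc \<Longrightarrow> f $ i = 0" for i by auto
  have "\<forall>i\<in>acc. (cmod (g $ i))\<^sup>2 = 0"
    using pg by (subst (asm) sum_nonneg_eq_0_iff) auto
  then have g0: "i \<in> acc \<Longrightarrow> g $ i = 0" for i by auto
  have t: "cnj (f $ i) * g $ i = 0" for i using f0 g0 by (cases "i \<in> acc") auto
  show ?thesis unfolding ip_def using t[of 1] t[of 2] by (simp only: add_0)
qed

lemma fs_eq: "valid_mcqfa M \<Longrightarrow> final_state M w =
     adjoint_mat (word_map (embed_word w) (adjoint_mat (Ua M)) (adjoint_mat (Ub M))) *v u0 M"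
  by (simp add: final_state_def final_state_eq)

lemma fs_norm: assumes "valid_mcqfa M" shows "norm (final_state M w) = 1"
proof -
  have "unitary2 (adjoint_mat (Ua M))" "unitary2 (adjoint_mat (Ub M))"
    using assms by (simp_all add: valid_mcqfa_def unitary_adj)
  then show ?thesis using assms
    by (simp add: fs_eq norm_unitary unitary_adj wm_unitary valid_mcqfa_def)
qed

lemma sep_orth: assumes "valid_mcqfa M" "separates_exactly M x y"
  shows "ip (final_state M x) (final_state M y) = 0"
  using assms(2) prob_orth[OF fs_norm[OF assms(1)], of x "acc M" "final_state M y"]
    prob_orth[OF fs_norm[OF assms(1)], of y "acc M" "final_state M x"]
    ip_cnj[of "final_state M y" "final_state M x"]
  unfolding separates_exactly_def accept_prob_def by auto

lemma dir1: assumes "valid_mcqfa M" "separates_exactly M x y"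
  shows "diag_i \<in> (\<lambda>(g, h). word_map (omega x y) g h) ` (SU2 \<times> SU2)"
proof -
  have uA: "unitary2 (adjoint_mat (Ua M))" and uB: "unitary2 (adjoint_mat (Ub M))"
    using assms(1) by (simp_all add: valid_mcqfa_def unitary_adj)
  obtain \<alpha> g where a0: "\<alpha> \<noteq> 0" and gS: "g \<in> SU2" and ga: "adjoint_mat (Ua M) = smat \<alpha> g"
    using unitary_decomp[OF uA] by blast
  obtain \<beta> h where b0: "\<beta> \<noteq> 0" and hS: "h \<in> SU2" and hb: "adjoint_mat (Ub M) = smat \<beta> h"
    using unitary_decomp[OF uB] by blast
  obtain kx where kx: "kx \<noteq> 0" "word_map (embed_word x) (smat \<alpha> g) (smat \<beta> h) = smat kx (word_map (embed_word x) g h)"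
    using wm_scale[OF a0 b0] by blast
  obtain ky where ky: "ky \<noteq> 0" "word_map (embed_word y) (smat \<alpha> g) (smat \<beta> h) = smat ky (word_map (embed_word y) g h)"
    using wm_scale[OF a0 b0] by blast
  have gu: "unitary2 g" and hu: "unitary2 h" using gS hS by (simp_all add: SU2_def)
  define W where "W = word_map (omega x y) g h"
  have WS: "W \<in> SU2" using gS hS by (simp add: W_def wm_SU2)
  let ?u = "u0 M"
  have "0 = ip (final_state M x) (final_state M y)" using sep_orth[OF assms] by simp
  also have "\<dots> = ip ?u ((smat kx (word_map (embed_word x) g h) ** adjoint_mat (smat ky (word_map (embed_word y) g h))) *v ?u)"
    using assms(1) by (simp add: fs_eq ga hb kx ky ip_adj matrix_vector_mul_assoc)
  also have "\<dots> = (kx * cnj ky) * ip ?u (W *v ?u)"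
    by (simp add: adj_smat smat_mult ip_smat W_def wm_omega[OF gu hu])
  finally have "ip ?u (W *v ?u) = 0" using kx ky by simp
  moreover have "ip ?u ?u = 1" using assms(1) by (simp add: ip_self valid_mcqfa_def)
  ultimately obtain V where VS: "V \<in> SU2" and VW: "V ** W ** adjoint_mat V = diag_i"
    using key_conj[OF WS] by blast
  have Vu: "unitary2 V" using VS by (simp add: SU2_def)
  have "word_map (omega x y) (V ** g ** adjoint_mat V) (V ** h ** adjoint_mat V) = diag_i"
    using VW by (simp add: wm_conj[OF Vu gu hu] W_def)
  moreover have "V ** g ** adjoint_mat V \<in> SU2" "V ** h ** adjoint_mat V \<in> SU2"
    using VS gS hS by (simp_all add: SU2_mult SU2_adj)
  ultimately show ?thesis by (intro rev_image_eqI[of "(V ** g ** adjoint_mat V, V ** h ** adjoint_mat V)"]) auto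
qed

lemma dir2: assumes "diag_i \<in> (\<lambda>(g, h). word_map (omega x y) g h) ` (SU2 \<times> SU2)"
  shows "\<exists>M. valid_mcqfa M \<and> separates_exactly M x y"
proof -
  obtain g h where gS: "g \<in> SU2" and hS: "h \<in> SU2" and gh: "word_map (omega x y) g h = diag_i"
    using assms by auto
  have gu: "unitary2 g" and hu: "unitary2 h" using gS hS by (simp_all add: SU2_def)
  define Px where "Px = word_map (embed_word x) g h"
  define Py where "Py = word_map (embed_word y) g h"
  have Pxu: "unitary2 Px" and Pyu: "unitary2 Py" using gu hu by (simp_all add: Px_def Py_def wm_unitary)
  have "Px ** adjoint_mat Py = diag_i" using gh by (simp add: wm_omega[OF gu hu] Px_def Py_def)
  then have PxD: "Px = diag_i ** Py" using unitary_cancel2[OF Pyu, of Px] by simp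
  define c :: complex where "c = of_real (1 / sqrt 2)"
  have cc: "c * c = 1/2" by (simp add: c_def flip: of_real_mult)
  have ccnj: "cnj c = c" by (simp add: c_def)
  define R where "R = mk2 c (- c) c c"
  have Ru: "unitary2 R" unfolding unitary2_def using cc ccnj by (simp add: R_def cmat_eq mult.commute)
  define V where "V = adjoint_mat R ** Py"
  have Vu: "unitary2 V" using Ru Pyu by (simp add: V_def unitary_mult unitary_adj)
  define g' where "g' = V ** g ** adjoint_mat V"
  define h' where "h' = V ** h ** adjoint_mat V"
  have g'u: "unitary2 g'" and h'u: "unitary2 h'" using Vu gu hu by (simp_all add: g'_def h'_def unitary_conj)
  define Px' where "Px' = word_map (embed_word x) g' h'"
  define Py' where "Py' = word_map (embed_word y) g' h'"
  have Px'u: "unitary2 Px'" using g'u h'u by (simp add: Px'_def wm_unitary)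
  have Px'e: "Px' = V ** Px ** adjoint_mat V" by (simp add: Px'_def g'_def h'_def wm_conj[OF Vu gu hu] Px_def)
  have Py'e: "Py' = V ** Py ** adjoint_mat V" by (simp add: Py'_def g'_def h'_def wm_conj[OF Vu gu hu] Py_def)
  define e1 :: cvec where "e1 = (\<chi> i. if i = 1 then 1 else 0)"
  have e1s[simp]: "e1 $ 1 = 1" "e1 $ 2 = 0" by (simp_all add: e1_def)
  have ne1: "norm e1 = 1" using norm_sq[of e1] norm_ge_zero[of e1] by (auto simp: power2_eq_1_iff)
  define M where "M = \<lparr>Ua = adjoint_mat g', Ub = adjoint_mat h', u0 = Px' *v e1, acc = {1}\<rparr>"
  have valid: "valid_mcqfa M"
    using g'u h'u Px'u ne1 by (simp add: M_def valid_mcqfa_def unitary_adj norm_unitary)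
  have fx: "final_state M x = (adjoint_mat Px' ** Px') *v e1"
    unfolding fs_eq[OF valid] by (simp add: M_def Px'_def matrix_vector_mul_assoc)
  have fy: "final_state M y = (adjoint_mat Py' ** Px') *v e1"
    unfolding fs_eq[OF valid] by (simp add: M_def Px'_def Py'_def matrix_vector_mul_assoc)
  have "adjoint_mat Py' ** Px' = adjoint_mat R ** diag_i ** R"
    using Pyu Ru
    by (simp add: Px'e Py'e PxD V_def adj_conj adj_mult matrix_mul_assoc unitary_cancel1 unitary_cancel2)
  then have fy': "final_state M y = (adjoint_mat R ** diag_i ** R) *v e1" using fy by simp
  have fx': "final_state M x = e1" using fx Px'u by (simp add: unitary2_def)
  have am: "acc M = {1}" by (simp add: M_def)
  have "accept_prob M x = 1" by (simp add: accept_prob_def fx' am)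
  moreover have "accept_prob M y = 0" by (simp add: accept_prob_def fy' am R_def)
  ultimately show ?thesis using valid by (auto simp: separates_exactly_def)
qed

theorem fact1:
  fixes x y :: pword
  assumes "x \<noteq> y"
  shows "(\<exists>M. valid_mcqfa M \<and> separates_exactly M x y) \<longleftrightarrow>
         diag_i \<in> (\<lambda>(g, h). word_map (omega x y) g h) ` (SU2 \<times> SU2)"
  using dir1 dir2 by blast

end
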